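(* Let $(\Omega,\rho)$ be a metric space, let $\mathcal P$ be the set of all Borel probability measures on $\Omega$, let $r\in[1,\infty)$ and let $n\ge1$ be an integer. Then \[ \inf_{\hat P}\ \sup_{P\in\mathcal P}\ \mathbb E_{X_1,\dots,X_n\overset{iid}{\sim}P}\Big[W_r^r\big(P,\hat P(X_1,\dots,X_n)\big)\Big]\;\ge\; c_r\sup_{k\in\{2,\dots,32n\}}R^r(k)\sqrt{\frac{k-1}{n}},\qquad c_r=\frac{3\log 2}{2^{r+12}}, \] where the infimum is over all estimators, i.e. all (possibly randomized) maps $\hat P:\Omega^n\to\mathcal P$. (If the right-hand side is $+\infty$, the claim is that the left-hand side is $+\infty$.)
   Context: For Borel probability measures $P,Q$ on $(\Omega,\rho)$ and $r\ge1$, $W_r(P,Q):=\inf_{\mu\in\Pi(P,Q)}\big(\mathbb E_{(X,Y)\sim\mu}[\rho^r(X,Y)]\big)^{1/r}$, with $\Pi(P,Q)$ the set of couplings (probability measures on $\Omega\times\Omega$ with marginals $P,Q$). For $S\subseteq\Omega$, the separation is $\mathrm{Sep}(S):=\inf_{x\ne y\in S}\rho(x,y)$. The packing radius is $R(k):=\sup\{\mathrm{Sep}(S): S\subseteq\Omega,\ |S|\ge k\}\in[0,\infty]$, with the convention $R(k)=0$ if $\Omega$ has fewer than $k$ points. *)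

theory Defs
  imports "HOL-Probability.Probability"
begin

definition borel_prob_measures :: "('a::metric_space) measure set" where
  "borel_prob_measures = {M. sets M = sets borel \<and> prob_space M}"

definition couplings :: "('a::metric_space) measure \<Rightarrow> 'a measure \<Rightarrow> ('a \<times> 'a) measure set" where
  "couplings P Q = {\<mu>. sets \<mu> = sets borel \<and> prob_space \<mu> \<and>
                       distr \<mu> borel fst = P \<and> distr \<mu> borel snd = Q}"

definition wasserstein_pow :: "real \<Rightarrow> ('a::metric_space) measure \<Rightarrow> 'a measure \<Rightarrow> ennreal" where
  "wasserstein_pow r P Q =
     (INF \<mu> \<in> couplings P Q. \<integral>\<^sup>+ z. ennreal (dist (fst z) (snd z) powr r) \<partial>\<mu>)"

definition sep :: "('a::metric_space) set \<Rightarrow> ennreal" where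
  "sep S = (INF p \<in> {(x, y). x \<in> S \<and> y \<in> S \<and> x \<noteq> y}. ennreal (dist (fst p) (snd p)))"

text \<open>Packing radius R(k) = sup of Sep(S) over S with |S| \<ge> k (infinite S allowed);
  equals 0 (the empty supremum) if there are fewer than k points.\<close>
definition packing_radius :: "('a::metric_space) itself \<Rightarrow> nat \<Rightarrow> ennreal" where
  "packing_radius _ k = (SUP S \<in> {S :: 'a set. infinite S \<or> card S \<ge> k}. sep S)"

definition ennreal_powr :: "ennreal \<Rightarrow> real \<Rightarrow> ennreal" where
  "ennreal_powr x r = (if x = \<infinity> then \<infinity> else ennreal (enn2real x powr r))"

text \<open>Randomized estimators: an auxiliary probability space U of randomness and a map
  from samples (x_0,...,x_{n-1}) and randomness u to Borel probability measures,
  such that the loss W_r^r(P, Phat X u) is a measurable function of (X,u) for every P.\<close>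
definition estimators :: "nat \<Rightarrow> real \<Rightarrow>
    ('u measure \<times> ((nat \<Rightarrow> 'a::metric_space) \<Rightarrow> 'u \<Rightarrow> 'a measure)) set" where
  "estimators n r = {(U, Phat). prob_space U \<and>
      (\<forall>xs \<in> space (PiM {..<n} (\<lambda>_. borel)). \<forall>u \<in> space U. Phat xs u \<in> borel_prob_measures) \<and>
      (\<forall>P \<in> borel_prob_measures.
         (\<lambda>z. wasserstein_pow r P (Phat (fst z) (snd z)))
           \<in> borel_measurable (PiM {..<n} (\<lambda>_. borel) \<Otimes>\<^sub>M U))}"

definition risk :: "nat \<Rightarrow> real \<Rightarrow> 'u measure \<Rightarrow> ((nat \<Rightarrow> 'a::metric_space) \<Rightarrow> 'u \<Rightarrow> 'a measure)
    \<Rightarrow> 'a measure \<Rightarrow> ennreal" where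
  "risk n r U Phat P =
     (\<integral>\<^sup>+ z. wasserstein_pow r P (Phat (fst z) (snd z)) \<partial>(PiM {..<n} (\<lambda>_. P) \<Otimes>\<^sub>M U))"

end

theory Submission
  imports Defs "HOL-Library.FuncSet"
begin


definition pw :: "real \<Rightarrow> nat \<Rightarrow> (nat \<Rightarrow> bool) \<Rightarrow> nat \<Rightarrow> real" where
  "pw \<epsilon> m \<sigma> i = (1 + (if \<sigma> (i div 2) = even i then \<epsilon> else - \<epsilon>)) / (2 * real m)"

definition flip :: "nat \<Rightarrow> (nat \<Rightarrow> bool) \<Rightarrow> nat \<Rightarrow> bool" where
  "flip j \<sigma> = \<sigma>(j := \<not> \<sigma> j)"

lemma sum_pairs: "(\<Sum>i<2*(m::nat). f i) = (\<Sum>j<m. f (2*j) + f (2*j+1)::real)"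
proof (induction m)
  case 0 then show ?case by simp
next
  case (Suc m)
  have "{..<2 * Suc m} = insert (2*m+1) (insert (2*m) {..<2*m})" by auto
  then show ?case using Suc by simp
qed

lemma pw_pair: "m > 0 \<Longrightarrow> pw \<epsilon> m \<sigma> (2*j) + pw \<epsilon> m \<sigma> (2*j+1) = 1 / real m"
  unfolding pw_def by (auto simp: field_simps)

lemma pw_sum: "m > 0 \<Longrightarrow> (\<Sum>i<2*m. pw \<epsilon> m \<sigma> i) = 1"
  using pw_pair[of m \<epsilon> \<sigma>] by (simp add: sum_pairs)

lemma pw_nonneg: "\<bar>\<epsilon>\<bar> \<le> 1 \<Longrightarrow> 0 \<le> pw \<epsilon> m \<sigma> i"
  unfolding pw_def by (auto intro!: divide_nonneg_nonneg)

lemma pw_flip: "m > 0 \<Longrightarrow> 0 \<le> \<epsilon> \<Longrightarrow> \<bar>pw \<epsilon> m \<sigma> (2*j) - pw \<epsilon> m (flip j \<sigma>) (2*j)\<bar> = \<epsilon> / m"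
  unfolding pw_def flip_def by (auto simp: field_simps)

lemma flip_flip: "flip j (flip j \<sigma>) = \<sigma>"
  unfolding flip_def by auto

lemma flip_in: "j < m \<Longrightarrow> \<sigma> \<in> PiE {..<m} (\<lambda>_. UNIV) \<Longrightarrow> flip j \<sigma> \<in> PiE {..<m} (\<lambda>_. UNIV)"
  unfolding flip_def by (auto simp: PiE_def extensional_def)

lemma sum_flip:
  assumes "j < m"
  shows "(\<Sum>\<sigma>\<in>PiE {..<m} (\<lambda>_. UNIV). g (flip j \<sigma>)) = (\<Sum>\<sigma>\<in>PiE {..<m} (\<lambda>_. UNIV). g \<sigma> :: real)"
  by (rule sum.reindex_bij_witness[where i="flip j" and j="flip j"])
     (auto simp: flip_flip flip_in assms)

lemma pair_flip_bound:
  assumes "j < m" "m > 0" "0 \<le> \<epsilon>" "\<And>\<sigma>. 0 \<le> \<pi> \<sigma>"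
  shows "(\<epsilon> / (2*m)) * (\<Sum>\<sigma>\<in>PiE {..<m} (\<lambda>_. UNIV). min (\<pi> \<sigma>) (\<pi> (flip j \<sigma>)))
     \<le> (\<Sum>\<sigma>\<in>PiE {..<m} (\<lambda>_. UNIV). \<pi> \<sigma> * \<bar>pw \<epsilon> m \<sigma> (2*j) - q\<bar>)"
proof -
  let ?C = "PiE {..<m} (\<lambda>_. UNIV :: bool set)"
  let ?c = "\<lambda>\<sigma>. \<bar>pw \<epsilon> m \<sigma> (2*j) - q\<bar>"
  have eq: "(\<Sum>\<sigma>\<in>?C. \<pi> \<sigma> * ?c \<sigma>) = (\<Sum>\<sigma>\<in>?C. \<pi> (flip j \<sigma>) * ?c (flip j \<sigma>))"
    using sum_flip[OF assms(1), of "\<lambda>\<sigma>. \<pi> \<sigma> * ?c \<sigma>"] by simp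
  have pt: "min (\<pi> \<sigma>) (\<pi> (flip j \<sigma>)) * (\<epsilon> / m) \<le> \<pi> \<sigma> * ?c \<sigma> + \<pi> (flip j \<sigma>) * ?c (flip j \<sigma>)" for \<sigma>
  proof -
    have "\<epsilon> / m \<le> ?c \<sigma> + ?c (flip j \<sigma>)"
      using pw_flip[OF assms(2,3), of \<sigma> j] by linarith
    then have "min (\<pi> \<sigma>) (\<pi> (flip j \<sigma>)) * (\<epsilon> / m) \<le> min (\<pi> \<sigma>) (\<pi> (flip j \<sigma>)) * (?c \<sigma> + ?c (flip j \<sigma>))"
      using assms(4) by (intro mult_left_mono) auto
    also have "\<dots> \<le> \<pi> \<sigma> * ?c \<sigma> + \<pi> (flip j \<sigma>) * ?c (flip j \<sigma>)"
      by (simp add: distrib_left add_mono mult_right_mono)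
    finally show ?thesis .
  qed
  have "(\<epsilon> / m) * (\<Sum>\<sigma>\<in>?C. min (\<pi> \<sigma>) (\<pi> (flip j \<sigma>))) = (\<Sum>\<sigma>\<in>?C. min (\<pi> \<sigma>) (\<pi> (flip j \<sigma>)) * (\<epsilon> / m))"
    by (simp add: sum_distrib_left mult.commute)
  also have "\<dots> \<le> (\<Sum>\<sigma>\<in>?C. \<pi> \<sigma> * ?c \<sigma> + \<pi> (flip j \<sigma>) * ?c (flip j \<sigma>))"
    by (intro sum_mono pt)
  also have "\<dots> = 2 * (\<Sum>\<sigma>\<in>?C. \<pi> \<sigma> * ?c \<sigma>)"
    using eq by (simp add: sum.distrib)
  finally show ?thesis by (simp add: field_simps)
qed

lemma loss_lemma:
  assumes "m > 0" "0 \<le> \<epsilon>" "\<epsilon> \<le> 1" "\<And>i. 0 \<le> q i" "(\<Sum>i<2*m. q i) \<le> 1" "\<And>\<sigma>. 0 \<le> \<pi> \<sigma>"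
  shows "(\<epsilon> / (4 * real m)) * (\<Sum>j<m. \<Sum>\<sigma>\<in>PiE {..<m} (\<lambda>_. UNIV). min (\<pi> \<sigma>) (\<pi> (flip j \<sigma>)))
     \<le> (\<Sum>\<sigma>\<in>PiE {..<m} (\<lambda>_. UNIV). \<pi> \<sigma> * (\<Sum>i<2*m. max 0 (pw \<epsilon> m \<sigma> i - q i)))"
proof -
  let ?C = "PiE {..<m} (\<lambda>_. UNIV :: bool set)"
  have one: "(\<Sum>j<m. \<bar>pw \<epsilon> m \<sigma> (2*j) - q (2*j)\<bar>) / 2 \<le> (\<Sum>i<2*m. max 0 (pw \<epsilon> m \<sigma> i - q i))" for \<sigma>
  proof -
    have "(\<Sum>j<m. \<bar>pw \<epsilon> m \<sigma> (2*j) - q (2*j)\<bar>) \<le> (\<Sum>j<m. \<bar>pw \<epsilon> m \<sigma> (2*j) - q (2*j)\<bar> + \<bar>pw \<epsilon> m \<sigma> (2*j+1) - q (2*j+1)\<bar>)"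
      by (intro sum_mono) auto
    also have "\<dots> = (\<Sum>i<2*m. \<bar>pw \<epsilon> m \<sigma> i - q i\<bar>)"
      by (rule sum_pairs[symmetric])
    also have "\<dots> \<le> (\<Sum>i<2*m. \<bar>pw \<epsilon> m \<sigma> i - q i\<bar>) + ((\<Sum>i<2*m. pw \<epsilon> m \<sigma> i) - (\<Sum>i<2*m. q i))"
      using pw_sum[OF assms(1)] assms(5) by simp
    also have "\<dots> = (\<Sum>i<2*m. \<bar>pw \<epsilon> m \<sigma> i - q i\<bar> + (pw \<epsilon> m \<sigma> i - q i))"
      by (simp add: sum.distrib sum_subtractf)
    also have "\<dots> = 2 * (\<Sum>i<2*m. max 0 (pw \<epsilon> m \<sigma> i - q i))"
      by (simp add: sum_distrib_left) (intro sum.cong; auto simp: max_def)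
    finally show ?thesis by simp
  qed
  have "(\<epsilon> / (4 * real m)) * (\<Sum>j<m. \<Sum>\<sigma>\<in>?C. min (\<pi> \<sigma>) (\<pi> (flip j \<sigma>)))
      = (\<Sum>j<m. (\<epsilon> / (2*m)) * (\<Sum>\<sigma>\<in>?C. min (\<pi> \<sigma>) (\<pi> (flip j \<sigma>)))) / 2"
    by (simp add: sum_distrib_left sum_divide_distrib)
  also have "\<dots> \<le> (\<Sum>j<m. \<Sum>\<sigma>\<in>?C. \<pi> \<sigma> * \<bar>pw \<epsilon> m \<sigma> (2*j) - q (2*j)\<bar>) / 2"
    using pair_flip_bound[OF _ assms(1,2,6)] by (intro divide_right_mono sum_mono) auto
  also have "\<dots> = (\<Sum>\<sigma>\<in>?C. \<pi> \<sigma> * ((\<Sum>j<m. \<bar>pw \<epsilon> m \<sigma> (2*j) - q (2*j)\<bar>) / 2))"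
    by (subst sum.swap) (simp add: sum_distrib_left sum_divide_distrib)
  also have "\<dots> \<le> (\<Sum>\<sigma>\<in>?C. \<pi> \<sigma> * (\<Sum>i<2*m. max 0 (pw \<epsilon> m \<sigma> i - q i)))"
    using assms(6) one by (intro sum_mono mult_left_mono) auto
  finally show ?thesis .
qed



lemma sqrt_prod: "finite I \<Longrightarrow> sqrt (\<Prod>t\<in>I. f t) = (\<Prod>t\<in>I. sqrt (f t))"
  by (induction I rule: finite_induct) (auto simp: real_sqrt_mult)

lemma overlap_general:
  fixes a b :: "nat \<Rightarrow> real"
  assumes K: "finite K" and I: "finite (I::nat set)" and a0: "\<And>i. 0 \<le> a i" and b0: "\<And>i. 0 \<le> b i"
    and sa: "(\<Sum>i\<in>K. a i) = 1" and sb: "(\<Sum>i\<in>K. b i) = 1"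
    and beta: "\<beta> \<le> (\<Sum>i\<in>K. sqrt (a i * b i))" "0 \<le> \<beta>"
  shows "\<beta> ^ (2 * card I) / 2 \<le> (\<Sum>w\<in>PiE I (\<lambda>_. K). min (\<Prod>t\<in>I. a (w t)) (\<Prod>t\<in>I. b (w t)))"
proof -
  define P where "P = PiE I (\<lambda>_. K)"
  have fP: "finite P" unfolding P_def using K I by (simp add: finite_PiE)
  define A where "A w = (\<Prod>t\<in>I. a (w t))" for w :: "nat \<Rightarrow> nat"
  define B where "B w = (\<Prod>t\<in>I. b (w t))" for w :: "nat \<Rightarrow> nat"
  have A0: "0 \<le> A w" for w unfolding A_def by (simp add: a0 prod_nonneg)
  have B0: "0 \<le> B w" for w unfolding B_def by (simp add: b0 prod_nonneg)
  have SA: "(\<Sum>w\<in>P. A w) = 1"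
    using prod_sum_PiE[OF I, of "\<lambda>_. K" "\<lambda>_ i. a i"] K sa unfolding A_def P_def by simp
  have SB: "(\<Sum>w\<in>P. B w) = 1"
    using prod_sum_PiE[OF I, of "\<lambda>_. K" "\<lambda>_ i. b i"] K sb unfolding B_def P_def by simp
  have SAB: "(\<Sum>w\<in>P. sqrt (A w * B w)) = (\<Sum>i\<in>K. sqrt (a i * b i)) ^ card I"
  proof -
    have "(\<Sum>w\<in>P. sqrt (A w * B w)) = (\<Sum>w\<in>P. \<Prod>t\<in>I. sqrt (a (w t) * b (w t)))"
      unfolding A_def B_def by (simp add: prod.distrib[symmetric] sqrt_prod I)
    also have "\<dots> = (\<Prod>t\<in>I. \<Sum>i\<in>K. sqrt (a i * b i))"
      using prod_sum_PiE[OF I, of "\<lambda>_. K" "\<lambda>_ i. sqrt (a i * b i)"] K unfolding P_def by simp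
    finally show ?thesis by simp
  qed
  have "\<beta> ^ card I \<le> (\<Sum>w\<in>P. sqrt (A w * B w))"
    unfolding SAB using beta by (intro power_mono) auto
  then have "\<beta> ^ (2 * card I) \<le> (\<Sum>w\<in>P. sqrt (A w * B w))\<^sup>2"
    using beta(2) by (metis power2_eq_square power_mono power_mult mult.commute zero_le_power)
  also have "(\<Sum>w\<in>P. sqrt (A w * B w)) = (\<Sum>w\<in>P. sqrt (min (A w) (B w)) * sqrt (max (A w) (B w)))"
    by (intro sum.cong) (auto simp: real_sqrt_mult[symmetric] min_def max_def mult.commute)
  also have "(\<dots>)\<^sup>2 \<le> (\<Sum>w\<in>P. (sqrt (min (A w) (B w)))\<^sup>2) * (\<Sum>w\<in>P. (sqrt (max (A w) (B w)))\<^sup>2)"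
    by (rule Cauchy_Schwarz_ineq_sum)
  also have "\<dots> = (\<Sum>w\<in>P. min (A w) (B w)) * (\<Sum>w\<in>P. max (A w) (B w))"
    using A0 B0 by (intro arg_cong2[where f="(*)"] sum.cong) (auto simp: max_def min_def)
  also have "\<dots> \<le> (\<Sum>w\<in>P. min (A w) (B w)) * 2"
  proof (rule mult_left_mono)
    have "(\<Sum>w\<in>P. max (A w) (B w)) \<le> (\<Sum>w\<in>P. A w + B w)"
      using A0 B0 by (intro sum_mono) auto
    then show "(\<Sum>w\<in>P. max (A w) (B w)) \<le> 2" using SA SB by (simp add: sum.distrib)
    show "0 \<le> (\<Sum>w\<in>P. min (A w) (B w))" using A0 B0 by (intro sum_nonneg) auto
  qed
  finally show ?thesis unfolding P_def A_def B_def by simp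
qed



lemma bc_bound:
  assumes "m > 0" "j < m" "0 \<le> \<epsilon>" "\<epsilon> \<le> 1"
  shows "1 - \<epsilon>^2 / m \<le> (\<Sum>i<2*m. sqrt (pw \<epsilon> m \<sigma> i * pw \<epsilon> m (flip j \<sigma>) i))"
proof -
  let ?g = "\<lambda>i. sqrt (pw \<epsilon> m \<sigma> i * pw \<epsilon> m (flip j \<sigma>) i)"
  have pair: "1 / m - (if j' = j then \<epsilon>^2 / m else 0) \<le> ?g (2*j') + ?g (2*j'+1)" for j'
  proof (cases "j' = j")
    case True
    have e2: "\<epsilon>^2 \<le> 1" using assms by (simp add: power_le_one)
    have "(1 - \<epsilon>^2) \<le> sqrt (1 - \<epsilon>^2)"
    proof -
      have x0: "0 \<le> 1 - \<epsilon>^2" using e2 by simp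
      have s1: "sqrt (1 - \<epsilon>^2) \<le> 1" using assms by simp
      have "1 - \<epsilon>^2 = sqrt (1 - \<epsilon>^2) * sqrt (1 - \<epsilon>^2)" using x0 by simp
      also have "\<dots> \<le> sqrt (1 - \<epsilon>^2) * 1" using s1 x0 by (intro mult_left_mono) auto
      finally show ?thesis by simp
    qed
    have g1: "?g (2*j) = sqrt (1 - \<epsilon>^2) / (2 * m)" "?g (2*j+1) = sqrt (1 - \<epsilon>^2) / (2 * m)"
      using assms(1) unfolding pw_def flip_def
      by (auto simp: real_sqrt_divide real_sqrt_mult power2_eq_square field_simps)
    have "1 / m - \<epsilon>^2 / m = (1 - \<epsilon>^2) / m" by (simp add: diff_divide_distrib)
    also have "\<dots> \<le> sqrt (1 - \<epsilon>^2) / m"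
      using \<open>(1 - \<epsilon>^2) \<le> sqrt (1 - \<epsilon>^2)\<close> assms(1) by (simp add: divide_right_mono)
    also have "\<dots> = ?g (2*j) + ?g (2*j+1)" using g1 by simp
    finally show ?thesis using True by simp
  next
    case False
    have ne: "pw \<epsilon> m (flip j \<sigma>) i = pw \<epsilon> m \<sigma> i" if "i div 2 = j'" for i
      using that False unfolding pw_def flip_def by auto
    have nn: "0 \<le> pw \<epsilon> m \<sigma> i" for i using assms by (intro pw_nonneg) auto
    have "?g (2*j') + ?g (2*j'+1) = pw \<epsilon> m \<sigma> (2*j') + pw \<epsilon> m \<sigma> (2*j'+1)"
      using ne[of "2*j'"] ne[of "2*j'+1"] nn by simp
    also have "\<dots> = 1 / m" by (rule pw_pair[OF assms(1)])
    finally show ?thesis using False by simp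
  qed
  have "1 - \<epsilon>^2 / m = (\<Sum>j'<m. 1 / m - (if j' = j then \<epsilon>^2 / m else 0))"
    using assms(1,2) by (simp add: sum_subtractf)
  also have "\<dots> \<le> (\<Sum>j'<m. ?g (2*j') + ?g (2*j'+1))"
    by (intro sum_mono pair)
  also have "\<dots> = (\<Sum>i<2*m. ?g i)" by (rule sum_pairs[symmetric])
  finally show ?thesis .
qed

lemma overlap:
  assumes "m > 0" "j < m" "0 \<le> \<epsilon>" "\<epsilon> \<le> 1" "n > 0" "\<epsilon>^2 = real m / (16 * real n)"
  shows "7/16 \<le> (\<Sum>w\<in>PiE {..<n} (\<lambda>_. {..<2*m}).
     min (\<Prod>t<n. pw \<epsilon> m \<sigma> (w t)) (\<Prod>t<n. pw \<epsilon> m (flip j \<sigma>) (w t)))"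
proof -
  let ?\<beta> = "1 - \<epsilon>^2 / m"
  have e2m: "\<epsilon>^2 / m = 1 / (16 * n)" using assms(1,6) by (simp add: field_simps)
  have b0: "0 \<le> ?\<beta>" using e2m assms(5) by (simp add: field_simps)
  have "?\<beta> ^ (2 * card {..<n}) / 2 \<le> (\<Sum>w\<in>PiE {..<n} (\<lambda>_. {..<2*m}).
     min (\<Prod>t<n. pw \<epsilon> m \<sigma> (w t)) (\<Prod>t<n. pw \<epsilon> m (flip j \<sigma>) (w t)))"
    by (rule overlap_general[OF _ _ _ _ _ _ bc_bound[OF assms(1-4)] b0])
       (use assms pw_nonneg pw_sum in auto)
  moreover have "7/16 \<le> ?\<beta> ^ (2 * card {..<n}) / 2"
  proof -
    define x where "x = \<epsilon>^2 / m"
    have x1: "-1 \<le> - x" using b0 unfolding x_def by simp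
    have "1 + real (2*n) * (- x) \<le> (1 + - x) ^ (2*n)"
      by (rule Bernoulli_inequality[OF x1])
    moreover have "real (2*n) * x = 1/8" unfolding x_def e2m using assms(5) by simp
    ultimately have "7/8 \<le> (1 - x) ^ (2*n)" by simp
    then show ?thesis unfolding x_def by simp
  qed
  ultimately show ?thesis by linarith
qed



lemma fst_borel: "fst \<in> borel_measurable (borel :: ('a::metric_space \<times> 'a) measure)"
  by (intro borel_measurable_continuous_onI continuous_on_fst continuous_on_id)
lemma snd_borel: "snd \<in> borel_measurable (borel :: ('a::metric_space \<times> 'a) measure)"
  by (intro borel_measurable_continuous_onI continuous_on_snd continuous_on_id)

lemma W_lower:
  fixes x :: "nat \<Rightarrow> 'a::metric_space"
  assumes r: "r > 0" and d: "\<delta> > 0" and P: "P \<in> borel_prob_measures" and Q: "Q \<in> borel_prob_measures"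
    and sep: "\<And>i j. i < K \<Longrightarrow> j < K \<Longrightarrow> i \<noteq> j \<Longrightarrow> \<delta> \<le> dist (x i) (x j)"
    and pm: "\<And>i. i < K \<Longrightarrow> p i \<le> measure P {x i}"
  shows "ennreal ((\<delta>/2) powr r * (\<Sum>i<K. max 0 (p i - measure Q (ball (x i) (\<delta>/2))))) \<le> wasserstein_pow r P Q"
  unfolding wasserstein_pow_def
proof (rule INF_greatest)
  fix \<mu> assume "\<mu> \<in> couplings P Q"
  then have s\<mu>: "sets \<mu> = sets borel" and ps: "prob_space \<mu>" and m1: "distr \<mu> borel fst = P"
    and m2: "distr \<mu> borel snd = Q" unfolding couplings_def by auto
  interpret prob_space \<mu> by fact
  have sp: "space \<mu> = UNIV" using sets_eq_imp_space_eq[OF s\<mu>] by simp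
  define c where "c = (\<delta>/2) powr r"
  have c0: "0 \<le> c" unfolding c_def by simp
  define A where "A i = {x i} \<times> (- ball (x i) (\<delta>/2))" for i
  have Aset: "A i \<in> sets \<mu>" for i
    unfolding s\<mu> A_def by (intro borel_closed closed_Times) auto
  have disj: "disjoint_family_on A {..<K}"
    unfolding disjoint_family_on_def A_def
  proof (intro ballI impI)
    fix i j assume "i \<in> {..<K}" "j \<in> {..<K}" "i \<noteq> j"
    then have "x i \<noteq> x j" using sep[of i j] d by auto
    then show "{x i} \<times> - ball (x i) (\<delta> / 2) \<inter> {x j} \<times> - ball (x j) (\<delta> / 2) = {}" by auto
  qed
  have fm: "fst \<in> measurable \<mu> borel" using fst_borel measurable_cong_sets[OF s\<mu> refl] by blast
  have sm: "snd \<in> measurable \<mu> borel" using snd_borel measurable_cong_sets[OF s\<mu> refl] by blast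
  have Bset: "UNIV \<times> ball (x i) (\<delta>/2) \<in> sets \<mu>" for i
  proof -
    have "open (UNIV \<times> ball (x i) (\<delta>/2))" by (intro open_Times) auto
    then show ?thesis unfolding s\<mu> by (rule borel_open)
  qed
  have mi: "p i - measure Q (ball (x i) (\<delta>/2)) \<le> measure \<mu> (A i)" if "i < K" for i
  proof -
    have e1: "fst -` {x i} \<inter> space \<mu> = {x i} \<times> UNIV" using sp by auto
    have e2: "snd -` ball (x i) (\<delta>/2) \<inter> space \<mu> = UNIV \<times> ball (x i) (\<delta>/2)" using sp by auto
    have "measure P {x i} = measure \<mu> ({x i} \<times> UNIV)"
      using measure_distr[OF fm, of "{x i}"] m1 unfolding e1 by simp
    moreover have "measure Q (ball (x i) (\<delta>/2)) = measure \<mu> (UNIV \<times> ball (x i) (\<delta>/2))"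
      using measure_distr[OF sm, of "ball (x i) (\<delta>/2)"] m2 unfolding e2 by simp
    moreover have "measure \<mu> ({x i} \<times> UNIV) \<le> measure \<mu> (A i \<union> UNIV \<times> ball (x i) (\<delta>/2))"
    proof (intro finite_measure_mono)
      show "A i \<union> UNIV \<times> ball (x i) (\<delta> / 2) \<in> sets \<mu>"
        using Aset[of i] Bset[of i] by (intro sets.Un)
    qed (auto simp: A_def)
    moreover have "measure \<mu> (A i \<union> UNIV \<times> ball (x i) (\<delta>/2)) \<le> measure \<mu> (A i) + measure \<mu> (UNIV \<times> ball (x i) (\<delta>/2))"
      by (intro measure_Un_le Aset Bset)
    ultimately show ?thesis using pm[OF that] by linarith
  qed
  have "ennreal (c * (\<Sum>i<K. max 0 (p i - measure Q (ball (x i) (\<delta>/2)))))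
      = (\<Sum>i<K. ennreal c * ennreal (max 0 (p i - measure Q (ball (x i) (\<delta>/2)))))"
  proof -
    have "(\<Sum>i<K. ennreal c * ennreal (max 0 (p i - measure Q (ball (x i) (\<delta>/2)))))
       = (\<Sum>i<K. ennreal (c * max 0 (p i - measure Q (ball (x i) (\<delta>/2)))))"
      by (intro sum.cong refl ennreal_mult[symmetric]) (use c0 in auto)
    also have "\<dots> = ennreal (\<Sum>i<K. c * max 0 (p i - measure Q (ball (x i) (\<delta>/2))))"
      by (rule sum_ennreal) (use c0 in auto)
    finally show ?thesis by (simp only: sum_distrib_left)
  qed
  also have "\<dots> \<le> (\<Sum>i<K. ennreal c * emeasure \<mu> (A i))"
  proof (intro sum_mono mult_left_mono)
    fix i assume "i \<in> {..<K}"
    then show "ennreal (max 0 (p i - measure Q (ball (x i) (\<delta>/2)))) \<le> emeasure \<mu> (A i)"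
      using mi[of i] by (auto simp: emeasure_eq_measure max_def)
  qed simp
  also have "\<dots> = ennreal c * emeasure \<mu> (\<Union>i<K. A i)"
  proof -
    have "A ` {..<K} \<subseteq> sets \<mu>" using Aset by auto
    then have "(\<Sum>i<K. emeasure \<mu> (A i)) = emeasure \<mu> (\<Union>i<K. A i)"
      using sum_emeasure[of A "{..<K}" \<mu>] disj by simp
    then show ?thesis by (simp add: sum_distrib_left[symmetric])
  qed
  also have "\<dots> = (\<integral>\<^sup>+ z. ennreal c * indicator (\<Union>i<K. A i) z \<partial>\<mu>)"
    using Aset by (intro nn_integral_cmult_indicator[symmetric]) auto
  also have "\<dots> \<le> (\<integral>\<^sup>+ z. ennreal (dist (fst z) (snd z) powr r) \<partial>\<mu>)"
  proof (intro nn_integral_mono)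
    fix z :: "'a \<times> 'a"
    show "ennreal c * indicator (\<Union>i<K. A i) z \<le> ennreal (dist (fst z) (snd z) powr r)"
    proof (cases "z \<in> (\<Union>i<K. A i)")
      case True
      then obtain i where "z \<in> A i" by auto
      then have "\<delta>/2 \<le> dist (fst z) (snd z)" unfolding A_def by (auto simp: dist_commute)
      then have "c \<le> dist (fst z) (snd z) powr r" unfolding c_def using d r by (intro powr_mono2) auto
      then show ?thesis using True by simp
    qed simp
  qed
  finally show "ennreal ((\<delta>/2) powr r * (\<Sum>i<K. max 0 (p i - measure Q (ball (x i) (\<delta>/2)))))
      \<le> (\<integral>\<^sup>+ z. ennreal (dist (fst z) (snd z) powr r) \<partial>\<mu>)" unfolding c_def .
qed



definition Ps :: "(nat \<Rightarrow> 'a::metric_space) \<Rightarrow> real \<Rightarrow> nat \<Rightarrow> (nat \<Rightarrow> bool) \<Rightarrow> 'a measure" where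
  "Ps x \<epsilon> m \<sigma> = distr (point_measure {..<2*m} (\<lambda>i. ennreal (pw \<epsilon> m \<sigma> i))) borel x"

lemma Ps_in:
  assumes "m > 0" "\<bar>\<epsilon>\<bar> \<le> 1"
  shows "Ps x \<epsilon> m \<sigma> \<in> borel_prob_measures"
proof -
  have "prob_space (point_measure {..<2*m} (\<lambda>i. ennreal (pw \<epsilon> m \<sigma> i)))"
  proof (rule prob_spaceI)
    have "emeasure (point_measure {..<2*m} (\<lambda>i. ennreal (pw \<epsilon> m \<sigma> i))) {..<2*m} = (\<Sum>i<2*m. ennreal (pw \<epsilon> m \<sigma> i))"
      by (rule emeasure_point_measure_finite) auto
    also have "\<dots> = 1" using pw_sum[OF assms(1)] pw_nonneg[OF assms(2)] by simp
    finally show "emeasure (point_measure {..<2*m} (\<lambda>i. ennreal (pw \<epsilon> m \<sigma> i)))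
        (space (point_measure {..<2*m} (\<lambda>i. ennreal (pw \<epsilon> m \<sigma> i)))) = 1"
      by (simp add: space_point_measure)
  qed
  then show ?thesis unfolding Ps_def borel_prob_measures_def
    by (auto intro!: prob_space.prob_space_distr)
qed

lemma Ps_point:
  assumes "inj_on x {..<2*m}" "i < 2*m"
  shows "emeasure (Ps x \<epsilon> m \<sigma>) {x i} = ennreal (pw \<epsilon> m \<sigma> i)"
proof -
  have "x -` {x i} \<inter> {..<2*m} = {i}" using assms by (auto simp: inj_on_def)
  then show ?thesis unfolding Ps_def
    using emeasure_point_measure_finite[of "{..<2*m}" "{i}" "\<lambda>i. ennreal (pw \<epsilon> m \<sigma> i)"] assms(2)
    by (subst emeasure_distr) (auto simp: space_point_measure intro!: borel_closed)
qed

lemma PiM_lower: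
  fixes x :: "nat \<Rightarrow> 'a::metric_space" and h :: "(nat \<Rightarrow> 'a) \<Rightarrow> ennreal"
  assumes P: "P \<in> borel_prob_measures" and inj: "inj_on x K" and K: "finite K"
    and pt: "\<And>i. i \<in> K \<Longrightarrow> emeasure P {x i} = ennreal (p i)" and p0: "\<And>i. 0 \<le> p i"
  shows "(\<Sum>w\<in>PiE {..<n} (\<lambda>_. K). ennreal (\<Prod>t<n. p (w t)) * h (\<lambda>t\<in>{..<n}. x (w t)))
          \<le> (\<integral>\<^sup>+ \<omega>. h \<omega> \<partial>PiM {..<n} (\<lambda>_. P))"
proof -
  define W where "W = PiE {..<n} (\<lambda>_. K)"
  define xw where "xw w = (\<lambda>t\<in>{..<n}. x (w t))" for w :: "nat \<Rightarrow> nat"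
  have fW: "finite W" unfolding W_def using K by (simp add: finite_PiE)
  have sP: "sets P = sets borel" and pP: "prob_space P" using P by (auto simp: borel_prob_measures_def)
  interpret PS: product_sigma_finite "\<lambda>_. P"
    unfolding product_sigma_finite_def using prob_space_imp_sigma_finite[OF pP] by simp
  have xinj: "w = w'" if "w \<in> W" "w' \<in> W" "xw w = xw w'" for w w'
  proof (rule ext)
    fix t show "w t = w' t"
    proof (cases "t < n")
      case True
      then have "x (w t) = x (w' t)" using that(3) unfolding xw_def by (metis lessThan_iff restrict_apply')
      then show ?thesis using inj that(1,2) True unfolding W_def by (auto simp: inj_on_def PiE_iff)
    next
      case False then show ?thesis using that(1,2) unfolding W_def by (auto simp: PiE_def extensional_def)
    qed
  qed
  have single: "{xw w} = PiE {..<n} (\<lambda>t. {x (w t)})" for w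
    unfolding xw_def by (auto simp: PiE_def extensional_def restrict_def fun_eq_iff)
  have sets_single: "{xw w} \<in> sets (PiM {..<n} (\<lambda>_. P))" for w
    unfolding single by (intro sets_PiM_I_finite) (auto simp: sP intro!: borel_closed)
  have em: "emeasure (PiM {..<n} (\<lambda>_. P)) {xw w} = ennreal (\<Prod>t<n. p (w t))" if "w \<in> W" for w
  proof -
    have "emeasure (PiM {..<n} (\<lambda>_. P)) {xw w} = (\<Prod>t<n. emeasure P {x (w t)})"
      unfolding single by (rule PS.emeasure_PiM) (auto simp: sP intro!: borel_closed)
    also have "\<dots> = (\<Prod>t<n. ennreal (p (w t)))"
      using that unfolding W_def by (intro prod.cong refl pt) (auto simp: PiE_iff)
    also have "\<dots> = ennreal (\<Prod>t<n. p (w t))" using p0 by (simp add: prod_ennreal)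
    finally show ?thesis .
  qed
  have pw_le: "(\<Sum>w\<in>W. h (xw w) * indicator {xw w} \<omega>) \<le> h \<omega>" for \<omega>
  proof (cases "\<exists>w0\<in>W. xw w0 = \<omega>")
    case True
    then obtain w0 where w0: "w0 \<in> W" "xw w0 = \<omega>" by auto
    have "(\<Sum>w\<in>W. h (xw w) * indicator {xw w} \<omega>) = (\<Sum>w\<in>W. if w = w0 then h \<omega> else 0)"
      using xinj w0 by (intro sum.cong refl) (auto simp: indicator_def)
    also have "\<dots> = h \<omega>" using w0 fW by simp
    finally show ?thesis by simp
  next
    case False
    then have "(\<Sum>w\<in>W. h (xw w) * indicator {xw w} \<omega>) = 0"
      by (intro sum.neutral) (auto simp: indicator_def)
    then show ?thesis by simp
  qed
  have "(\<Sum>w\<in>W. ennreal (\<Prod>t<n. p (w t)) * h (xw w)) = (\<Sum>w\<in>W. h (xw w) * emeasure (PiM {..<n} (\<lambda>_. P)) {xw w})"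
    using em by (intro sum.cong refl) (auto simp: mult.commute)
  also have "\<dots> = (\<Sum>w\<in>W. \<integral>\<^sup>+ \<omega>. h (xw w) * indicator {xw w} \<omega> \<partial>PiM {..<n} (\<lambda>_. P))"
    using sets_single by (intro sum.cong refl nn_integral_cmult_indicator[symmetric])
  also have "\<dots> = (\<integral>\<^sup>+ \<omega>. (\<Sum>w\<in>W. h (xw w) * indicator {xw w} \<omega>) \<partial>PiM {..<n} (\<lambda>_. P))"
    using sets_single by (intro nn_integral_sum[symmetric]) auto
  also have "\<dots> \<le> (\<integral>\<^sup>+ \<omega>. h \<omega> \<partial>PiM {..<n} (\<lambda>_. P))"
    by (intro nn_integral_mono pw_le)
  finally show ?thesis unfolding W_def xw_def .
qed



lemma est_bound:
  fixes x :: "nat \<Rightarrow> 'a::metric_space" and U :: "'u measure"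
    and Phat :: "(nat \<Rightarrow> 'a) \<Rightarrow> 'u \<Rightarrow> 'a measure"
  assumes r: "1 \<le> r" and n: "0 < n" and m: "0 < m" and e: "0 \<le> \<epsilon>" "\<epsilon> \<le> 1" "\<epsilon>^2 = real m / (16 * real n)"
    and d: "0 < \<delta>" and sep: "\<And>i j. i < 2*m \<Longrightarrow> j < 2*m \<Longrightarrow> i \<noteq> j \<Longrightarrow> \<delta> \<le> dist (x i) (x j)"
    and E: "(U, Phat) \<in> estimators n r"
  shows "ennreal ((\<delta>/2) powr r * (7/64) * \<epsilon>) \<le> (SUP P\<in>borel_prob_measures. risk n r U Phat P)"
proof -
  define S where "S = (SUP P\<in>borel_prob_measures. risk n r U Phat P)"
  define C where "C = PiE {..<m} (\<lambda>_. UNIV :: bool set)"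
  define W where "W = PiE {..<n} (\<lambda>_. {..<2*m})"
  define \<pi> where "\<pi> \<sigma> w = (\<Prod>t<n. pw \<epsilon> m \<sigma> (w t))" for \<sigma> w
  define xw where "xw w = (\<lambda>t\<in>{..<n}. x (w t))" for w :: "nat \<Rightarrow> nat"
  define c where "c = (\<delta>/2) powr r"
  have c0: "0 \<le> c" unfolding c_def by simp
  have fC: "finite C" unfolding C_def by (simp add: finite_PiE)
  have cardC: "card C = 2^m" unfolding C_def by (simp add: card_PiE)
  have fW: "finite W" unfolding W_def by (simp add: finite_PiE)
  have e1: "\<bar>\<epsilon>\<bar> \<le> 1" using e by simp
  have pw0: "0 \<le> pw \<epsilon> m \<sigma> i" for \<sigma> i using pw_nonneg[OF e1] .
  have \<pi>0: "0 \<le> \<pi> \<sigma> w" for \<sigma> w unfolding \<pi>_def by (simp add: prod_nonneg pw0)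
  have xinj: "inj_on x {..<2*m}"
  proof (rule inj_onI)
    fix i j assume "i \<in> {..<2*m}" "j \<in> {..<2*m}" "x i = x j"
    then show "i = j" using sep[of i j] d by (cases "i = j") auto
  qed
  from E have pU: "prob_space U"
    and Qin: "\<And>xs u. xs \<in> space (PiM {..<n} (\<lambda>_. borel)) \<Longrightarrow> u \<in> space U \<Longrightarrow> Phat xs u \<in> borel_prob_measures"
    and meas: "\<And>P. P \<in> borel_prob_measures \<Longrightarrow>
        (\<lambda>z. wasserstein_pow r P (Phat (fst z) (snd z))) \<in> borel_measurable (PiM {..<n} (\<lambda>_. borel) \<Otimes>\<^sub>M U)"
    unfolding estimators_def by auto
  interpret U: prob_space U by fact
  have xw_space: "xw w \<in> space (PiM {..<n} (\<lambda>_. borel))" for w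
    unfolding xw_def by (simp add: space_PiM)
  define g where "g \<sigma> v = (\<integral>\<^sup>+ u. wasserstein_pow r (Ps x \<epsilon> m \<sigma>) (Phat v u) \<partial>U)" for \<sigma> v
  have stepa: "(\<Sum>w\<in>W. ennreal (\<pi> \<sigma> w) * g \<sigma> (xw w)) \<le> risk n r U Phat (Ps x \<epsilon> m \<sigma>)" for \<sigma>
  proof -
    let ?P = "Ps x \<epsilon> m \<sigma>"
    have Pin: "?P \<in> borel_prob_measures" by (rule Ps_in[OF m e1])
    then have sP: "sets ?P = sets borel" by (simp add: borel_prob_measures_def)
    have mF: "(\<lambda>z. wasserstein_pow r ?P (Phat (fst z) (snd z))) \<in> borel_measurable (PiM {..<n} (\<lambda>_. ?P) \<Otimes>\<^sub>M U)"
    proof -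
      have "sets (PiM {..<n} (\<lambda>_. ?P) \<Otimes>\<^sub>M U) = sets (PiM {..<n} (\<lambda>_. borel) \<Otimes>\<^sub>M U)"
        by (intro sets_pair_measure_cong sets_PiM_cong refl) (simp add: sP)
      then show ?thesis using meas[OF Pin] by (simp cong: measurable_cong_sets)
    qed
    have "(\<Sum>w\<in>W. ennreal (\<pi> \<sigma> w) * g \<sigma> (xw w)) \<le> (\<integral>\<^sup>+ \<omega>. g \<sigma> \<omega> \<partial>PiM {..<n} (\<lambda>_. ?P))"
      unfolding W_def \<pi>_def xw_def
      by (rule PiM_lower[OF Pin xinj]) (auto simp: Ps_point[OF xinj] pw0)
    also have "\<dots> = risk n r U Phat ?P"
      unfolding g_def risk_def
      using U.nn_integral_fst[OF mF] by simp
    finally show ?thesis .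
  qed
  define G where "G w = c * (\<epsilon> / (4 * real m)) * (\<Sum>j<m. \<Sum>\<sigma>\<in>C. min (\<pi> \<sigma> w) (\<pi> (flip j \<sigma>) w))" for w
  have stepd: "ennreal (G w) \<le> (\<Sum>\<sigma>\<in>C. ennreal (\<pi> \<sigma> w) * wasserstein_pow r (Ps x \<epsilon> m \<sigma>) Q)"
    if Q: "Q \<in> borel_prob_measures" for w Q
  proof -
    define q where "q i = measure Q (ball (x i) (\<delta>/2))" for i
    have q0: "0 \<le> q i" for i unfolding q_def by simp
    have q1: "(\<Sum>i<2*m. q i) \<le> 1"
    proof -
      interpret Q: prob_space Q using Q by (simp add: borel_prob_measures_def)
      have sQ: "sets Q = sets borel" using Q by (simp add: borel_prob_measures_def)
      have disj: "disjoint_family_on (\<lambda>i. ball (x i) (\<delta>/2)) {..<2*m}"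
        unfolding disjoint_family_on_def
      proof (intro ballI impI)
        fix i j assume ij: "i \<in> {..<2*m}" "j \<in> {..<2*m}" "i \<noteq> j"
        show "ball (x i) (\<delta> / 2) \<inter> ball (x j) (\<delta> / 2) = {}"
        proof (rule ccontr)
          assume "ball (x i) (\<delta> / 2) \<inter> ball (x j) (\<delta> / 2) \<noteq> {}"
          then obtain y where "dist (x i) y < \<delta>/2" "dist (x j) y < \<delta>/2" by auto
          then have "dist (x i) (x j) < \<delta>" using dist_triangle[of "x i" "x j" y] by (simp add: dist_commute)
          then show False using sep[of i j] ij by auto
        qed
      qed
      have "(\<Sum>i<2*m. q i) = measure Q (\<Union>i<2*m. ball (x i) (\<delta>/2))"
        unfolding q_def
        by (rule measure_finite_Union[symmetric]) (auto simp: sQ disj Q.emeasure_eq_measure)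
      also have "\<dots> \<le> 1" by (rule Q.prob_le_1)
      finally show ?thesis .
    qed
    have Wl: "ennreal (c * (\<Sum>i<2*m. max 0 (pw \<epsilon> m \<sigma> i - q i))) \<le> wasserstein_pow r (Ps x \<epsilon> m \<sigma>) Q" for \<sigma>
      unfolding c_def q_def
    proof (rule W_lower[OF _ d Ps_in[OF m e1] Q sep])
      show "0 < r" using r by simp
      fix i assume "i < 2*m"
      then show "pw \<epsilon> m \<sigma> i \<le> measure (Ps x \<epsilon> m \<sigma>) {x i}"
        using Ps_point[OF xinj, of i] pw0 by (simp add: measure_def)
    qed auto
    define D where "D \<sigma> = (\<Sum>i<2*m. max 0 (pw \<epsilon> m \<sigma> i - q i))" for \<sigma>
    have D0: "0 \<le> D \<sigma>" for \<sigma> unfolding D_def by (intro sum_nonneg) auto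
    have "G w \<le> c * (\<Sum>\<sigma>\<in>C. \<pi> \<sigma> w * D \<sigma>)"
      unfolding G_def D_def C_def mult.assoc
      by (intro mult_left_mono[OF _ c0] loss_lemma[OF m e(1,2)] q0 q1 \<pi>0)
    then have "ennreal (G w) \<le> ennreal (\<Sum>\<sigma>\<in>C. \<pi> \<sigma> w * (c * D \<sigma>))"
      by (intro ennreal_leI) (simp add: sum_distrib_left mult.left_commute)
    also have "\<dots> = (\<Sum>\<sigma>\<in>C. ennreal (\<pi> \<sigma> w) * ennreal (c * D \<sigma>))"
      using \<pi>0 D0 c0 by (simp add: ennreal_mult sum_ennreal[symmetric])
    also have "\<dots> \<le> (\<Sum>\<sigma>\<in>C. ennreal (\<pi> \<sigma> w) * wasserstein_pow r (Ps x \<epsilon> m \<sigma>) Q)"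
      by (intro sum_mono mult_left_mono) (auto simp: D_def Wl)
    finally show ?thesis .
  qed
  have mW: "(\<lambda>u. wasserstein_pow r (Ps x \<epsilon> m \<sigma>) (Phat v u)) \<in> borel_measurable U"
    if "v \<in> space (PiM {..<n} (\<lambda>_. borel))" for \<sigma> v
    using measurable_Pair2[OF meas[OF Ps_in[OF m e1]] that] by simp
  have "ennreal (\<Sum>w\<in>W. G w) = (\<Sum>w\<in>W. ennreal (G w))"
  proof (rule sum_ennreal[symmetric])
    fix w
    have "0 \<le> (\<Sum>j<m. \<Sum>\<sigma>\<in>C. min (\<pi> \<sigma> w) (\<pi> (flip j \<sigma>) w))"
      by (intro sum_nonneg) (simp add: \<pi>0)
    then show "0 \<le> G w" unfolding G_def using c0 e(1) by (intro mult_nonneg_nonneg) auto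
  qed
  also have "\<dots> \<le> (\<Sum>w\<in>W. \<integral>\<^sup>+ u. (\<Sum>\<sigma>\<in>C. ennreal (\<pi> \<sigma> w) * wasserstein_pow r (Ps x \<epsilon> m \<sigma>) (Phat (xw w) u)) \<partial>U)"
  proof (intro sum_mono)
    fix w
    have "ennreal (G w) = (\<integral>\<^sup>+ u. ennreal (G w) \<partial>U)" by (simp add: U.emeasure_space_1)
    also have "\<dots> \<le> (\<integral>\<^sup>+ u. (\<Sum>\<sigma>\<in>C. ennreal (\<pi> \<sigma> w) * wasserstein_pow r (Ps x \<epsilon> m \<sigma>) (Phat (xw w) u)) \<partial>U)"
      by (intro nn_integral_mono stepd Qin xw_space)
    finally show "ennreal (G w) \<le> \<dots>" .
  qed
  also have "\<dots> = (\<Sum>w\<in>W. \<Sum>\<sigma>\<in>C. ennreal (\<pi> \<sigma> w) * g \<sigma> (xw w))"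
    unfolding g_def
    by (intro sum.cong refl, subst nn_integral_sum)
       (auto intro!: mW xw_space nn_integral_cmult sum.cong borel_measurable_times_ennreal)
  also have "\<dots> = (\<Sum>\<sigma>\<in>C. \<Sum>w\<in>W. ennreal (\<pi> \<sigma> w) * g \<sigma> (xw w))"
    by (rule sum.swap)
  also have "\<dots> \<le> (\<Sum>\<sigma>\<in>C. risk n r U Phat (Ps x \<epsilon> m \<sigma>))"
    by (intro sum_mono stepa)
  also have "\<dots> \<le> (\<Sum>\<sigma>\<in>C. S)"
    unfolding S_def by (intro sum_mono SUP_upper Ps_in[OF m e1])
  also have "\<dots> = of_nat (2^m) * S" using cardC by simp
  finally have main: "ennreal (\<Sum>w\<in>W. G w) \<le> of_nat (2^m) * S" .
  have "(\<Sum>w\<in>W. G w) = c * (\<epsilon> / (4 * real m)) * (\<Sum>j<m. \<Sum>\<sigma>\<in>C. \<Sum>w\<in>W. min (\<pi> \<sigma> w) (\<pi> (flip j \<sigma>) w))"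
    unfolding G_def by (simp add: sum_distrib_left sum.swap[of _ W])
  also have "\<dots> \<ge> c * (\<epsilon> / (4 * real m)) * (\<Sum>j<m. \<Sum>\<sigma>\<in>C. 7/16)"
    unfolding W_def \<pi>_def
    by (intro mult_left_mono sum_mono overlap[OF m _ e(1,2) n e(3)]) (auto simp: c0 e)
  also have "c * (\<epsilon> / (4 * real m)) * (\<Sum>j<m. \<Sum>\<sigma>\<in>C. (7/16::real)) = 2^m * (c * (7/64) * \<epsilon>)"
    using cardC m by (simp add: field_simps)
  finally have low: "2^m * (c * (7/64) * \<epsilon>) \<le> (\<Sum>w\<in>W. G w)" .
  have "of_nat (2^m) * ennreal (c * (7/64) * \<epsilon>) = ennreal (2^m * (c * (7/64) * \<epsilon>))"
    using c0 e by (simp add: ennreal_mult[symmetric] ennreal_of_nat_eq_real_of_nat)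
  also have "\<dots> \<le> of_nat (2^m) * S" using low main by (meson order_trans ennreal_leI)
  finally have "of_nat (2^m) * ennreal (c * (7/64) * \<epsilon>) \<le> of_nat (2^m) * S" .
  then have "ennreal (c * (7/64) * \<epsilon>) \<le> S"
    by (subst (asm) ennreal_mult_le_mult_iff) (auto simp: power_eq_top_ennreal)
  then show ?thesis unfolding S_def c_def .
qed



lemma get_points:
  assumes "ennreal \<delta> < packing_radius TYPE('a::metric_space) k" "2 \<le> k" "0 \<le> \<delta>"
  obtains x :: "nat \<Rightarrow> 'a::metric_space" where "\<And>i j. i < k \<Longrightarrow> j < k \<Longrightarrow> i \<noteq> j \<Longrightarrow> \<delta> < dist (x i) (x j)"
proof -
  from assms(1) obtain S :: "'a set" where S: "infinite S \<or> card S \<ge> k" and lt: "ennreal \<delta> < sep S"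
    unfolding packing_radius_def by (auto simp: less_SUP_iff)
  obtain T where T: "T \<subseteq> S" "finite T" "card T = k"
  proof (cases "infinite S")
    case True
    then show ?thesis using infinite_arbitrarily_large[OF True, of k] that by blast
  next
    case False
    then have "card S \<ge> k" using S by auto
    then show ?thesis using obtain_subset_with_card_n that by blast
  qed
  obtain x where bij: "bij_betw x {0..<card T} T" using ex_bij_betw_nat_finite[OF T(2)] by blast
  show ?thesis
  proof (rule that)
    fix i j assume ij: "i < k" "j < k" "i \<noteq> j"
    have xi: "x i \<in> S" "x j \<in> S" using bij ij T by (auto simp: bij_betw_def)
    have "x i \<noteq> x j" using bij ij T by (auto simp: bij_betw_def inj_on_def)
    then have "sep S \<le> ennreal (dist (x i) (x j))"
      unfolding sep_def using xi by (intro INF_lower2[of "(x i, x j)"]) auto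
    with lt have "ennreal \<delta> < ennreal (dist (x i) (x j))" by order
    then show "\<delta> < dist (x i) (x j)" using assms(3) by (simp add: ennreal_less_iff)
  qed
qed

lemma sup_arg:
  fixes L R :: ennreal
  assumes r: "0 < r" and a: "0 \<le> a"
    and H: "\<And>\<delta>. 0 < \<delta> \<Longrightarrow> ennreal \<delta> < R \<Longrightarrow> ennreal (a * \<delta> powr r) \<le> L"
  shows "ennreal a * ennreal_powr R r \<le> L"
proof (cases "a = 0")
  case True then show ?thesis by simp
next
  case False
  then have a0: "0 < a" using a by simp
  have key: "ennreal y \<le> L" if "0 < y" "ennreal (y / a) < ennreal_powr R r" for y
  proof -
    define t where "t = y / a"
    have t0: "0 < t" unfolding t_def using that a0 by simp
    define \<delta> where "\<delta> = t powr (1/r)"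
    have d0: "0 < \<delta>" unfolding \<delta>_def using t0 by simp
    have dr: "\<delta> powr r = t" unfolding \<delta>_def using t0 r by (simp add: powr_powr)
    have "ennreal \<delta> < R"
    proof (cases R)
      case top then show ?thesis by simp
    next
      case (real R')
      then have "ennreal t < ennreal (R' powr r)"
        using that(2) unfolding t_def ennreal_powr_def by auto
      then have "t < R' powr r" using t0 by (simp add: ennreal_less_iff)
      then have "t powr (1/r) < (R' powr r) powr (1/r)" using r t0 by (intro powr_less_mono2) auto
      also have "\<dots> = R'" using r real(1) by (simp add: powr_powr)
      finally show ?thesis unfolding \<delta>_def using real by (simp add: ennreal_less_iff)
    qed
    then have "ennreal (a * \<delta> powr r) \<le> L" by (rule H[OF d0])
    also have "a * \<delta> powr r = y" unfolding dr t_def using a0 by simp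
    finally show ?thesis .
  qed
  show ?thesis
  proof (rule dense_le)
    fix y assume y: "y < ennreal a * ennreal_powr R r"
    show "y \<le> L"
    proof (cases y)
      case top then show ?thesis using y by simp
    next
      case (real y')
      show ?thesis
      proof (cases "y' = 0")
        case True then show ?thesis using real by simp
      next
        case False
        then have y0: "0 < y'" using real by simp
        have "ennreal (y' / a) < ennreal_powr R r"
        proof -
          have "ennreal a * ennreal (y' / a) = ennreal (a * (y' / a))"
            by (rule ennreal_mult[symmetric]) (use a0 y0 in auto)
          also have "a * (y' / a) = y'" using a0 by simp
          finally have "ennreal a * ennreal (y' / a) = ennreal y'" .
          then have "ennreal a * ennreal (y' / a) < ennreal a * ennreal_powr R r" using y real by simp
          then show ?thesis
          proof (rule contrapos_pp)
            assume "\<not> ennreal (y' / a) < ennreal_powr R r"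
            then have "ennreal_powr R r \<le> ennreal (y' / a)" by simp
            then have "ennreal a * ennreal_powr R r \<le> ennreal a * ennreal (y' / a)" by (rule mult_left_mono) simp
            then show "\<not> ennreal a * ennreal (y' / a) < ennreal a * ennreal_powr R r" by simp
          qed
        qed
        then show ?thesis using key[OF y0] real by simp
      qed
    qed
  qed
qed



lemma const_bound:
  assumes r: "1 \<le> r" and d: "0 < \<delta>" and n: "0 < n" and k: "2 \<le> k" "k \<le> 32 * n"
  shows "3 * ln 2 / 2 powr (r + 12) * sqrt ((real k - 1) / real n) * \<delta> powr r
     \<le> (\<delta>/2) powr r * (7/64) * sqrt (real (k div 2) / (16 * real n))"
proof -
  define m where "m = k div 2"
  define \<epsilon> where "\<epsilon> = sqrt (real m / (16 * real n))"
  define s where "s = sqrt ((real k - 1) / real n)"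
  have km: "real k - 1 \<le> 2 * real m" unfolding m_def by linarith
  have "s \<le> sqrt (36 * (real m / (16 * real n)))"
  proof -
    have "(real k - 1) / real n \<le> (9/4 * real m) / real n" using km by (intro divide_right_mono) auto
    also have "\<dots> = 36 * (real m / (16 * real n))" by simp
    finally show ?thesis unfolding s_def by (rule real_sqrt_le_mono)
  qed
  also have "\<dots> = sqrt 36 * \<epsilon>" unfolding \<epsilon>_def by (simp only: real_sqrt_mult)
  also have "sqrt 36 = (6::real)" by (simp add: real_sqrt_unique)
  finally
  have s6: "s \<le> 6 * \<epsilon>" .
  have ln2: "ln (2::real) \<le> 1" using ln_le_minus_one[of 2] by simp
  have p12: "2 powr (r + 12) = 2 powr r * 4096" by (simp add: powr_add)
  have dp: "(\<delta>/2) powr r = \<delta> powr r / 2 powr r" using d by (simp add: powr_divide)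
  have e0: "0 \<le> \<epsilon>" unfolding \<epsilon>_def by simp
  have "3 * ln 2 * s \<le> 3 * 1 * (6 * \<epsilon>)"
    using ln2 s6 e0 k by (intro mult_mono) (auto simp: s_def)
  also have "\<dots> \<le> 4096 * (7/64) * \<epsilon>" using e0 by simp
  finally have key: "3 * ln 2 * s \<le> 4096 * (7/64) * \<epsilon>" .
  have "3 * ln 2 / 2 powr (r + 12) * s * \<delta> powr r = (\<delta> powr r / 2 powr r) * ((3 * ln 2 * s) / 4096)"
    unfolding p12 by (simp add: field_simps)
  also have "\<dots> \<le> (\<delta> powr r / 2 powr r) * ((4096 * (7/64) * \<epsilon>) / 4096)"
    using key by (intro mult_left_mono divide_right_mono) auto
  also have "\<dots> = (\<delta>/2) powr r * (7/64) * \<epsilon>" unfolding dp by simp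
  finally show ?thesis unfolding s_def \<epsilon>_def m_def .
qed

theorem theorem3:
  fixes r :: real and n :: nat
  assumes "r \<ge> 1" and "n \<ge> 1"
  shows "(INF E \<in> (estimators n r :: ('u measure \<times> ((nat \<Rightarrow> 'a::metric_space) \<Rightarrow> 'u \<Rightarrow> 'a measure)) set).
            SUP P \<in> borel_prob_measures. risk n r (fst E) (snd E) P)
         \<ge> ennreal (3 * ln 2 / 2 powr (r + 12)) *
           (SUP k \<in> {2..32 * n}.
              ennreal_powr (packing_radius TYPE('a) k) r * ennreal (sqrt ((real k - 1) / real n)))"
proof -
  define c where "c = 3 * ln 2 / 2 powr (r + 12)"
  have c0: "0 \<le> c" unfolding c_def by simp
  have n0: "0 < n" using assms by simp
  have "ennreal c * (SUP k \<in> {2..32 * n}.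
              ennreal_powr (packing_radius TYPE('a) k) r * ennreal (sqrt ((real k - 1) / real n)))
     = (SUP k \<in> {2..32 * n}. ennreal c *
              (ennreal_powr (packing_radius TYPE('a) k) r * ennreal (sqrt ((real k - 1) / real n))))"
    by (rule SUP_mult_left_ennreal)
  also have "\<dots> \<le> (INF E \<in> (estimators n r :: ('u measure \<times> ((nat \<Rightarrow> 'a::metric_space) \<Rightarrow> 'u \<Rightarrow> 'a measure)) set).
            SUP P \<in> borel_prob_measures. risk n r (fst E) (snd E) P)"
  proof (rule SUP_least)
    fix k assume k: "k \<in> {2..32*n}"
    define s where "s = sqrt ((real k - 1) / real n)"
    define m where "m = k div 2"
    define \<epsilon> where "\<epsilon> = sqrt (real m / (16 * real n))"
    have s0: "0 \<le> s" unfolding s_def using k by simp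
    have m0: "0 < m" unfolding m_def using k by auto
    have e0: "0 \<le> \<epsilon>" unfolding \<epsilon>_def by simp
    have e1: "\<epsilon> \<le> 1" unfolding \<epsilon>_def using k n0 m_def by (auto simp: field_simps)
    have e2: "\<epsilon>^2 = real m / (16 * real n)" unfolding \<epsilon>_def by simp
    have m2k: "2 * m \<le> k" unfolding m_def by simp
    show "ennreal c * (ennreal_powr (packing_radius TYPE('a) k) r * ennreal (sqrt ((real k - 1) / real n)))
       \<le> (INF E \<in> (estimators n r :: ('u measure \<times> ((nat \<Rightarrow> 'a::metric_space) \<Rightarrow> 'u \<Rightarrow> 'a measure)) set).
            SUP P \<in> borel_prob_measures. risk n r (fst E) (snd E) P)"
    proof (rule INF_greatest)
      fix E assume E: "E \<in> (estimators n r :: ('u measure \<times> ((nat \<Rightarrow> 'a::metric_space) \<Rightarrow> 'u \<Rightarrow> 'a measure)) set)"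
      obtain U Phat where UP: "E = (U, Phat)" by (cases E)
      have "ennreal (c * s) * ennreal_powr (packing_radius TYPE('a) k) r
          \<le> (SUP P \<in> borel_prob_measures. risk n r U Phat P)"
      proof (rule sup_arg)
        show "0 < r" using assms by simp
        show "0 \<le> c * s" using c0 s0 by simp
        fix \<delta> :: real assume d: "0 < \<delta>" "ennreal \<delta> < packing_radius TYPE('a) k"
        obtain x :: "nat \<Rightarrow> 'a" where x: "\<And>i j. i < k \<Longrightarrow> j < k \<Longrightarrow> i \<noteq> j \<Longrightarrow> \<delta> < dist (x i) (x j)"
          using get_points[OF d(2)] k d(1) by auto
        have "ennreal ((\<delta>/2) powr r * (7/64) * \<epsilon>) \<le> (SUP P\<in>borel_prob_measures. risk n r U Phat P)"
        proof (rule est_bound[OF _ n0 m0 e0 e1 e2 d(1)])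
          show "1 \<le> r" using assms by simp
          show "(U, Phat) \<in> estimators n r" using E UP by simp
          fix i j assume "i < 2*m" "j < 2*m" "i \<noteq> j"
          then show "\<delta> \<le> dist (x i) (x j)" using x[of i j] m2k by auto
        qed
        moreover have "c * s * \<delta> powr r \<le> (\<delta>/2) powr r * (7/64) * \<epsilon>"
          unfolding c_def s_def \<epsilon>_def m_def
          using const_bound[of r \<delta> n k] assms d k by auto
        ultimately show "ennreal (c * s * \<delta> powr r) \<le> (SUP P\<in>borel_prob_measures. risk n r U Phat P)"
          by (meson ennreal_leI order_trans)
      qed
      moreover have "ennreal c * (ennreal_powr (packing_radius TYPE('a) k) r * ennreal s)
          = ennreal (c * s) * ennreal_powr (packing_radius TYPE('a) k) r"
        using c0 s0 by (simp add: ennreal_mult mult_ac)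
      ultimately show "ennreal c * (ennreal_powr (packing_radius TYPE('a) k) r * ennreal (sqrt ((real k - 1) / real n)))
          \<le> (SUP P \<in> borel_prob_measures. risk n r (fst E) (snd E) P)"
        using UP unfolding s_def by simp
    qed
  qed
  finally show ?thesis unfolding c_def .
qed

end
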